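(* Let $K=K_1K_2=d\,m\,K_2$ with $K_1,K_2,d,m\in\mathbb{N}^+$, and let $\Sigma$ be a $d\times d$ covariance matrix. Let $X_1,\dots,X_K$ be random variables such that the blocks $(X_{(j-1)d+1},\dots,X_{jd})$, $j=1,\dots,mK_2$, are i.i.d. $N(0,\Sigma)$. Define $Y_i=\sum_{j=1}^{K_1}X_{j+(i-1)K_1}$ for $i=1,\dots,K_2$. Then $$\mathbb{E}\left[\frac{1}{\log K_1}\left(\frac{1}{K_2}\sum_{i=1}^{K_2}\log|Y_i|-\frac1K\sum_{i=1}^K\log|X_i|\right)\right]=\frac12\cdot\frac{\log m+\log\mathbf{1}^\top\Sigma\mathbf{1}-\frac1d\sum_{i=1}^d\log\Sigma_{ii}}{\log m+\log d}.$$ In particular, when $d=K_1\ge2$, $m=1$ and $\Sigma=\beta\mathbf{1}\mathbf{1}^\top+(1-\beta)I$ with $\beta\in[0,1]$, this expectation equals $\frac12\frac{\log(\beta d^2+(1-\beta)d)}{\log d}$, and $$\Big\{\tfrac12\tfrac{\log(\beta d^2+(1-\beta)d)}{\log d}:\beta\in[0,1]\Big\}=\Big[\tfrac12,1\Big].$$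
   Context: $\mathbf{1}\in\mathbb{R}^d$ is the all-ones vector and $I$ the $d\times d$ identity. *)

theory Defs
  imports "HOL-Probability.Probability"
begin

definition covariance_matrix :: "nat \<Rightarrow> (nat \<Rightarrow> nat \<Rightarrow> real) \<Rightarrow> bool" where
  "covariance_matrix d \<Sigma> \<longleftrightarrow>
     (\<forall>i\<in>{1..d}. \<forall>k\<in>{1..d}. \<Sigma> i k = \<Sigma> k i) \<and>
     (\<forall>v :: nat \<Rightarrow> real. (\<Sum>i=1..d. \<Sum>k=1..d. v i * \<Sigma> i k * v k) \<ge> 0)"

text \<open>The random vector (V 1, ..., V d) on M is distributed as N(0, Sigma)
  (general, possibly degenerate, multivariate normal law, defined via its
  characteristic function).\<close>
definition centered_gaussian_vector ::
  "'a measure \<Rightarrow> nat \<Rightarrow> (nat \<Rightarrow> 'a \<Rightarrow> real) \<Rightarrow> (nat \<Rightarrow> nat \<Rightarrow> real) \<Rightarrow> bool" where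
  "centered_gaussian_vector M d V \<Sigma> \<longleftrightarrow>
     (\<forall>i\<in>{1..d}. V i \<in> borel_measurable M) \<and>
     (\<forall>t :: nat \<Rightarrow> real.
        (\<integral>\<omega>. cis (\<Sum>i=1..d. t i * V i \<omega>) \<partial>M)
          = complex_of_real (exp (- (1/2) * (\<Sum>i=1..d. \<Sum>k=1..d. t i * \<Sigma> i k * t k))))"

end

theory Submission
  imports Defs
begin


lemma h_int: "integrable lborel (\<lambda>x::real. indicator {0..1} x * x powr (-1/2))"
proof -
  have "(\<lambda>x::real. x powr (-1/2)) integrable_on {0..1}"
    by (rule integrable_on_powr_from_0) auto
  then have "(\<lambda>x::real. x powr (-1/2)) absolutely_integrable_on {0..1}"
    by (rule nonnegative_absolutely_integrable_1) auto
  then have "integrable lebesgue (\<lambda>x::real. indicator {0..1} x * x powr (-1/2))"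
    by (simp add: set_integrable_def)
  then show ?thesis
    by (subst (asm) integrable_completion) auto
qed

lemma neg_ln_le: assumes "0 < (y::real)" shows "- ln y \<le> 2 * y powr (-1/2)"
proof -
  have "y powr (-1/2) = exp (-(1/2) * ln y)" using assms by (simp add: powr_def)
  moreover have "exp (-(1/2) * ln y) \<ge> 1 + (-(1/2) * ln y)" by (rule exp_ge_add_one_self)
  moreover have "exp (-(1/2) * ln y) > 0" by simp
  ultimately show ?thesis by linarith
qed

lemma std_density_le1: "std_normal_density x \<le> 1"
proof -
  have "sqrt (2 * pi) \<ge> 1" using pi_gt3 by (simp add: real_le_rsqrt)
  moreover have "exp (- x\<^sup>2 / 2) \<le> 1" by simp
  ultimately have "(1 / sqrt (2 * pi)) * exp (- x\<^sup>2 / 2) \<le> 1 * 1"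
    by (intro mult_mono) (auto simp: divide_simps)
  then show ?thesis by (simp add: std_normal_density_def)
qed

lemma ln_std_int: "integrable std_normal_distribution (\<lambda>x. ln \<bar>x\<bar>)"
proof -
  define h where "h = (\<lambda>x::real. indicator {0..1} x * x powr (-1/2))"
  have hi: "integrable lborel h" using h_int by (simp add: h_def)
  have hi2: "integrable lborel (\<lambda>x. h (0 + (-1) * x))"
    using hi by (subst lborel_integrable_real_affine_iff) auto
  have mi: "integrable lborel (\<lambda>x. std_normal_density x * \<bar>x\<bar> ^ 1)"
    by (rule integrable_std_normal_moment_abs)
  have B: "integrable lborel (\<lambda>x. 2 * (h x + h (0 + (-1) * x)) + std_normal_density x * \<bar>x\<bar> ^ 1)"
    using hi hi2 mi by (intro Bochner_Integration.integrable_add Bochner_Integration.integrable_mult_right) auto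
  have hnn: "h y \<ge> 0" for y by (simp add: h_def)
  have "integrable lborel (\<lambda>x. std_normal_density x *\<^sub>R ln \<bar>x\<bar>)"
  proof (rule Bochner_Integration.integrable_bound[OF B])
    show "(\<lambda>x. std_normal_density x *\<^sub>R ln \<bar>x\<bar>) \<in> borel_measurable lborel" by measurable
    show "AE x in lborel. norm (std_normal_density x *\<^sub>R ln \<bar>x\<bar>) \<le>
          norm (2 * (h x + h (0 + (-1) * x)) + std_normal_density x * \<bar>x\<bar> ^ 1)"
    proof (rule AE_I2)
      fix x :: real
      have p0: "std_normal_density x \<ge> 0" by (rule normal_density_nonneg)
      have p1: "std_normal_density x \<le> 1" by (rule std_density_le1)
      have R: "2 * (h x + h (0 + (-1) * x)) + std_normal_density x * \<bar>x\<bar> ^ 1 \<ge> 0"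
        using hnn[of x] hnn[of "-x"] p0 by simp
      have "\<bar>std_normal_density x * ln \<bar>x\<bar>\<bar> \<le> 2 * (h x + h (0 + (-1) * x)) + std_normal_density x * \<bar>x\<bar>"
      proof (cases "x = 0")
        case True then show ?thesis using R by simp
      next
        case False
        show ?thesis
        proof (cases "\<bar>x\<bar> \<le> 1")
          case True
          have l: "ln \<bar>x\<bar> \<le> 0" using True False by simp
          have "- ln \<bar>x\<bar> \<le> 2 * \<bar>x\<bar> powr (-1/2)" using False by (intro neg_ln_le) auto
          moreover have "h x + h (0 + (-1) * x) = \<bar>x\<bar> powr (-1/2)"
            using True False by (auto simp: h_def indicator_def)
          moreover have "\<bar>std_normal_density x * ln \<bar>x\<bar>\<bar> \<le> - ln \<bar>x\<bar>"
          proof -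
            have "\<bar>std_normal_density x * ln \<bar>x\<bar>\<bar> = std_normal_density x * (- ln \<bar>x\<bar>)"
              using l p0 by (simp add: abs_mult)
            also have "\<dots> \<le> 1 * (- ln \<bar>x\<bar>)" using l p1 by (intro mult_right_mono) auto
            finally show ?thesis by simp
          qed
          moreover have "std_normal_density x * \<bar>x\<bar> \<ge> 0" using p0 by simp
          ultimately show ?thesis by (metis (no_types, lifting) add_increasing2 order_trans)
        next
          case b: False
          have l: "0 \<le> ln \<bar>x\<bar>" "ln \<bar>x\<bar> \<le> \<bar>x\<bar>" using b by (auto intro: ln_le_minus_one[THEN order_trans] simp: ln_ge_zero_iff)
          have "\<bar>std_normal_density x * ln \<bar>x\<bar>\<bar> = std_normal_density x * ln \<bar>x\<bar>"
            using l p0 by (simp add: abs_mult)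
          also have "\<dots> \<le> std_normal_density x * \<bar>x\<bar>" using l p0 by (intro mult_left_mono) auto
          finally show ?thesis using hnn[of x] hnn[of "-x"] by simp
        qed
      qed
      then show "norm (std_normal_density x *\<^sub>R ln \<bar>x\<bar>) \<le>
          norm (2 * (h x + h (0 + (-1) * x)) + std_normal_density x * \<bar>x\<bar> ^ 1)"
        using R by simp
    qed
  qed
  then show ?thesis
    by (subst integrable_density) (auto simp: normal_density_nonneg)
qed

lemma gauss_ln:
  fixes M :: "'a measure" and Z :: "'a \<Rightarrow> real"
  assumes P: "prob_space M" and Zm[measurable]: "Z \<in> borel_measurable M" and v: "v > 0"
    and ch: "\<And>s::real. (\<integral>\<omega>. cis (s * Z \<omega>) \<partial>M) = complex_of_real (exp (- (s^2 * v) / 2))"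
  shows "integrable M (\<lambda>\<omega>. ln \<bar>Z \<omega>\<bar>) \<and>
         (\<integral>\<omega>. ln \<bar>Z \<omega>\<bar> \<partial>M) = ln v / 2 + (\<integral>x. ln \<bar>x\<bar> \<partial>std_normal_distribution)"
proof -
  interpret prob_space M by (rule P)
  define \<sigma> where "\<sigma> = sqrt v"
  have sp: "\<sigma> > 0" using v by (simp add: \<sigma>_def)
  have s2: "\<sigma>^2 = v" using v by (simp add: \<sigma>_def)
  define W where "W = (\<lambda>\<omega>. Z \<omega> / \<sigma>)"
  have Wm[measurable]: "W \<in> borel_measurable M" by (simp add: W_def)
  define N where "N = distr M borel W"
  have rd: "real_distribution N" unfolding N_def by (rule real_distribution_distr) simp
  have "char N t = char std_normal_distribution t" for t
  proof -
    have "char N t = (\<integral>\<omega>. iexp (t * W \<omega>) \<partial>M)"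
      unfolding char_def N_def by (subst integral_distr) auto
    also have "\<dots> = (\<integral>\<omega>. cis ((t / \<sigma>) * Z \<omega>) \<partial>M)"
      by (simp add: cis_conv_exp W_def)
    also have "\<dots> = complex_of_real (exp (- ((t/\<sigma>)^2 * v) / 2))" by (rule ch)
    also have "(t/\<sigma>)^2 * v = t^2" using sp s2 v by (simp add: power_divide)
    finally show ?thesis by (simp add: char_std_normal_distribution)
  qed
  then have NE: "N = std_normal_distribution"
    by (intro Levy_uniqueness rd real_dist_normal_dist ext)
  have eqf: "(\<lambda>\<omega>. ln \<bar>Z \<omega>\<bar>) = (\<lambda>\<omega>. (\<lambda>y. ln \<bar>\<sigma> * y\<bar>) (W \<omega>))"
    using sp by (simp add: W_def)
  have AEs: "AE y in std_normal_distribution. ln \<bar>\<sigma> * y\<bar> = ln \<sigma> + ln \<bar>y\<bar>"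
  proof -
    have "AE y in lborel. (y::real) \<noteq> 0" by (rule AE_lborel_singleton)
    then have "AE y in std_normal_distribution. y \<noteq> 0"
      by (subst AE_density) (auto elim: AE_mp)
    then show ?thesis
      by (rule AE_mp) (use sp in \<open>auto simp: abs_mult ln_mult\<close>)
  qed
  interpret S: prob_space std_normal_distribution
    by (rule prob_space_normal_density) simp
  have I1: "integrable std_normal_distribution (\<lambda>y. ln \<bar>\<sigma> * y\<bar>)"
  proof -
    have "integrable std_normal_distribution (\<lambda>y. ln \<sigma> + ln \<bar>y\<bar>)"
      using ln_std_int S.integrable_const
      by (intro Bochner_Integration.integrable_add) auto
    then show ?thesis using AEs by (subst integrable_cong_AE) auto
  qed
  have int: "integrable M (\<lambda>\<omega>. ln \<bar>Z \<omega>\<bar>)"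
    using I1 unfolding eqf NE[symmetric] N_def by (subst (asm) integrable_distr_eq) auto
  have "(\<integral>\<omega>. ln \<bar>Z \<omega>\<bar> \<partial>M) = (\<integral>y. ln \<bar>\<sigma> * y\<bar> \<partial>N)"
    unfolding eqf N_def by (subst integral_distr) auto
  also have "\<dots> = (\<integral>y. ln \<sigma> + ln \<bar>y\<bar> \<partial>std_normal_distribution)"
    unfolding NE using AEs by (intro integral_cong_AE) auto
  also have "\<dots> = ln \<sigma> + (\<integral>y. ln \<bar>y\<bar> \<partial>std_normal_distribution)"
    using ln_std_int S.integrable_const
      S.prob_space
    by (subst Bochner_Integration.integral_add) auto
  also have "ln \<sigma> = ln v / 2" using v by (simp add: \<sigma>_def ln_sqrt)
  finally show ?thesis using int by simp
qed



lemma sum_blocks: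
  fixes f :: "nat \<Rightarrow> 'b::comm_monoid_add"
  shows "(\<Sum>i=1..a*b. f i) = (\<Sum>p=1..a. \<Sum>k=1..b. f ((p-1)*b + k))"
proof (induction a)
  case 0 then show ?case by simp
next
  case (Suc a)
  have "(\<Sum>i=1..Suc a*b. f i) = (\<Sum>i=1..a*b + b. f i)" by (simp add: add.commute)
  also have "\<dots> = (\<Sum>i=1..a*b. f i) + (\<Sum>i=a*b+1..a*b + b. f i)"
    by (rule sum.ub_add_nat) simp
  also have "(\<Sum>i=a*b+1..a*b + b. f i) = (\<Sum>k=1..b. f (a*b + k))"
    using sum.shift_bounds_cl_nat_ivl[of f 1 "a*b" b] by (simp add: add.commute)
  finally show ?case using Suc by simp
qed

lemma cis_sum: "finite A \<Longrightarrow> cis (\<Sum>a\<in>A. f a) = (\<Prod>a\<in>A. cis (f a))"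
  by (induction A rule: finite_induct) (auto simp: cis_mult[symmetric])

lemma part3:
  assumes D: "(D::nat) \<ge> 2"
  shows "(\<lambda>\<beta>::real. (1/2) * ln (\<beta> * real D ^ 2 + (1 - \<beta>) * real D) / ln (real D)) ` {0..1} = {1/2..1}"
proof -
  have D1: "real D > 1" using D by simp
  have lD: "ln (real D) > 0" using D1 by simp
  have DD: "real D ^ 2 - real D > 0" using D1 by (simp add: power2_eq_square)
  show ?thesis
  proof (intro equalityI subsetI)
    fix y assume "y \<in> (\<lambda>\<beta>::real. (1/2) * ln (\<beta> * real D ^ 2 + (1 - \<beta>) * real D) / ln (real D)) ` {0..1}"
    then obtain \<beta> where b: "0 \<le> \<beta>" "\<beta> \<le> 1" and y: "y = (1/2) * ln (\<beta> * real D ^ 2 + (1 - \<beta>) * real D) / ln (real D)"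
      by auto
    define a where "a = \<beta> * real D ^ 2 + (1 - \<beta>) * real D"
    have a1: "a = real D + \<beta> * (real D ^ 2 - real D)" by (simp add: a_def algebra_simps)
    have a2: "a = real D ^ 2 - (1 - \<beta>) * (real D ^ 2 - real D)" by (simp add: a_def algebra_simps)
    have "real D \<le> a" using a1 b DD by simp
    then have l1: "ln (real D) \<le> ln a" using D1 by simp
    have "a \<le> real D ^ 2" using a2 b DD by simp
    then have "ln a \<le> ln (real D ^ 2)" using D1 \<open>real D \<le> a\<close> by simp
    then have l2: "ln a \<le> 2 * ln (real D)" using D1 by (simp add: ln_realpow)
    have "y = ln a / (2 * ln (real D))" using y by (simp add: a_def)
    then have e: "ln a = (2*y) * ln (real D)" using lD by (simp add: field_simps)
    have "1 * ln (real D) \<le> (2*y) * ln (real D)" using l1 e by simp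
    then have "1 \<le> 2*y" using lD mult_le_cancel_right_pos by blast
    moreover have "(2*y) * ln (real D) \<le> 2 * ln (real D)" using l2 e by simp
    then have "2*y \<le> 2" using lD mult_le_cancel_right_pos by blast
    ultimately show "y \<in> {1/2..1}" by simp
  next
    fix y :: real assume "y \<in> {1/2..1}"
    then have y: "1/2 \<le> y" "y \<le> 1" by auto
    define p where "p = real D powr (2*y)"
    have p1: "real D \<le> p" using powr_mono[of 1 "2*y" "real D"] D1 y by (simp add: p_def)
    have p2: "p \<le> real D ^ 2" using powr_mono[of "2*y" 2 "real D"] D1 y by (simp add: p_def powr_realpow)
    define \<beta> where "\<beta> = (p - real D) / (real D ^ 2 - real D)"
    have b: "0 \<le> \<beta>" "\<beta> \<le> 1" using p1 p2 DD by (auto simp: \<beta>_def field_simps)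
    have "\<beta> * real D ^ 2 + (1 - \<beta>) * real D = real D + \<beta> * (real D ^ 2 - real D)" by (simp add: algebra_simps)
    also have "\<dots> = p" using DD by (simp add: \<beta>_def)
    finally have e: "\<beta> * real D ^ 2 + (1 - \<beta>) * real D = p" .
    have "ln p = 2 * y * ln (real D)" using D1 by (simp add: p_def ln_powr)
    then have "y = (1/2) * ln (\<beta> * real D ^ 2 + (1 - \<beta>) * real D) / ln (real D)"
      using lD by (simp add: e)
    then show "y \<in> (\<lambda>\<beta>::real. (1/2) * ln (\<beta> * real D ^ 2 + (1 - \<beta>) * real D) / ln (real D)) ` {0..1}"
      using b by auto
  qed
qed



theorem theorem6:
  fixes M :: "'a measure" and X :: "nat \<Rightarrow> 'a \<Rightarrow> real"
    and d m K1 K2 K :: nat and \<Sigma> :: "nat \<Rightarrow> nat \<Rightarrow> real"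
  assumes "prob_space M"
    and pos: "d \<ge> 1" "m \<ge> 1" "K2 \<ge> 1"
    and K1_def: "K1 = d * m" and K_def: "K = K1 * K2"
    and cov: "covariance_matrix d \<Sigma>"
    and diag_pos: "\<forall>i\<in>{1..d}. \<Sigma> i i > 0"
    and sum_pos: "(\<Sum>i=1..d. \<Sum>k=1..d. \<Sigma> i k) > 0"
    and indep: "prob_space.indep_vars M (\<lambda>_. Pi\<^sub>M {1..d} (\<lambda>_. borel))
                  (\<lambda>j \<omega>. \<lambda>i\<in>{1..d}. X ((j - 1) * d + i) \<omega>) {1..m * K2}"
    and gauss: "\<forall>j\<in>{1..m * K2}.
                  centered_gaussian_vector M d (\<lambda>i. X ((j - 1) * d + i)) \<Sigma>"
  defines "Y \<equiv> (\<lambda>i \<omega>. \<Sum>j=1..K1. X (j + (i - 1) * K1) \<omega>)"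
  defines "F \<equiv> (\<lambda>\<omega>. (1 / ln (real K1)) *
                 ((1 / real K2) * (\<Sum>i=1..K2. ln \<bar>Y i \<omega>\<bar>)
                  - (1 / real K) * (\<Sum>i=1..K. ln \<bar>X i \<omega>\<bar>)))"
  shows "integrable M F \<and>
         (\<integral>\<omega>. F \<omega> \<partial>M) =
           (1/2) * (ln (real m) + ln (\<Sum>i=1..d. \<Sum>k=1..d. \<Sigma> i k)
                    - (1 / real d) * (\<Sum>i=1..d. ln (\<Sigma> i i)))
                 / (ln (real m) + ln (real d)) \<and>
         (\<forall>\<beta>::real. (d = K1 \<and> d \<ge> 2 \<and> m = 1 \<and> 0 \<le> \<beta> \<and> \<beta> \<le> 1 \<and>
            (\<forall>i\<in>{1..d}. \<forall>k\<in>{1..d}. \<Sigma> i k = \<beta> + (if i = k then 1 - \<beta> else 0)))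
          \<longrightarrow> (\<integral>\<omega>. F \<omega> \<partial>M) =
                (1/2) * ln (\<beta> * real d ^ 2 + (1 - \<beta>) * real d) / ln (real d)) \<and>
         (\<forall>D::nat. D \<ge> 2 \<longrightarrow>
            (\<lambda>\<beta>::real. (1/2) * ln (\<beta> * real D ^ 2 + (1 - \<beta>) * real D) / ln (real D)) ` {0..1}
              = {1/2..1})"
proof -
  interpret prob_space M by (rule assms(1))
  define c where "c = (\<integral>x. ln \<bar>x\<bar> \<partial>std_normal_distribution)"
  define S where "S = (\<Sum>i=1..d. \<Sum>k=1..d. \<Sigma> i k)"
  define SB where "SB = (\<lambda>b \<omega>. \<Sum>k=1..d. X ((b-1)*d + k) \<omega>)"
  have Spos: "S > 0" using sum_pos by (simp add: S_def)
  have gv: "centered_gaussian_vector M d (\<lambda>i. X ((b-1)*d+i)) \<Sigma>" if "b \<in> {1..m*K2}" for b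
    using gauss that by auto
  have Xm: "X ((b-1)*d+k) \<in> borel_measurable M" if "b \<in> {1..m*K2}" "k \<in> {1..d}" for b k
    using gv[OF that(1)] that(2) unfolding centered_gaussian_vector_def by auto
  have SBm: "SB b \<in> borel_measurable M" if "b \<in> {1..m*K2}" for b
    unfolding SB_def using Xm[OF that] by (intro borel_measurable_sum) auto
  have chX: "(\<integral>\<omega>. cis (s * X ((b-1)*d+k) \<omega>) \<partial>M) = complex_of_real (exp (- (s^2 * \<Sigma> k k) / 2))"
    if b: "b \<in> {1..m*K2}" and k: "k \<in> {1..d}" for b k s
  proof -
    define t where "t = (\<lambda>i::nat. if i = k then s else 0)"
    have A: "(\<Sum>i=1..d. t i * X ((b-1)*d+i) \<omega>) = s * X ((b-1)*d+k) \<omega>" for \<omega>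
    proof -
      have "(\<Sum>i=1..d. t i * X ((b-1)*d+i) \<omega>) = (\<Sum>i=1..d. if i = k then s * X ((b-1)*d+k) \<omega> else 0)"
        by (rule sum.cong) (auto simp: t_def)
      also have "\<dots> = s * X ((b-1)*d+k) \<omega>" using k by (simp add: sum.delta)
      finally show ?thesis .
    qed
    have B: "(\<Sum>i=1..d. \<Sum>j=1..d. t i * \<Sigma> i j * t j) = s^2 * \<Sigma> k k"
    proof -
      have "(\<Sum>i=1..d. \<Sum>j=1..d. t i * \<Sigma> i j * t j) = (\<Sum>i=1..d. if i = k then s * \<Sigma> k k * s else 0)"
      proof (rule sum.cong)
        fix i assume "i \<in> {1..d}"
        have "(\<Sum>j=1..d. t i * \<Sigma> i j * t j) = (\<Sum>j=1..d. if j = k then t i * \<Sigma> i k * s else 0)"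
          by (rule sum.cong) (auto simp: t_def)
        also have "\<dots> = t i * \<Sigma> i k * s" using k by (simp add: sum.delta)
        finally show "(\<Sum>j=1..d. t i * \<Sigma> i j * t j) = (if i = k then s * \<Sigma> k k * s else 0)"
          by (simp add: t_def)
      qed simp
      also have "\<dots> = s^2 * \<Sigma> k k" using k by (simp add: sum.delta power2_eq_square)
      finally show ?thesis .
    qed
    have "(\<integral>\<omega>. cis (\<Sum>i=1..d. t i * X ((b-1)*d+i) \<omega>) \<partial>M)
          = complex_of_real (exp (- (1/2) * (\<Sum>i=1..d. \<Sum>j=1..d. t i * \<Sigma> i j * t j)))"
      using gv[OF b] unfolding centered_gaussian_vector_def by blast
    then show ?thesis unfolding A B by simp
  qed
  have chB: "(\<integral>\<omega>. cis (s * SB b \<omega>) \<partial>M) = complex_of_real (exp (- (s^2 * S) / 2))"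
    if b: "b \<in> {1..m*K2}" for b s
  proof -
    have A: "(\<Sum>i=1..d. s * X ((b-1)*d+i) \<omega>) = s * SB b \<omega>" for \<omega>
      by (simp add: SB_def sum_distrib_left)
    have B: "(\<Sum>i=1..d. \<Sum>j=1..d. s * \<Sigma> i j * s) = s^2 * S"
      by (simp add: S_def sum_distrib_left sum_distrib_right power2_eq_square mult_ac)
    have all: "\<forall>t::nat\<Rightarrow>real. (\<integral>\<omega>. cis (\<Sum>i=1..d. t i * X ((b-1)*d+i) \<omega>) \<partial>M)
          = complex_of_real (exp (- (1/2) * (\<Sum>i=1..d. \<Sum>j=1..d. t i * \<Sigma> i j * t j)))"
      using gv[OF b] unfolding centered_gaussian_vector_def by blast
    have "(\<integral>\<omega>. cis (\<Sum>i=1..d. s * X ((b-1)*d+i) \<omega>) \<partial>M)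
          = complex_of_real (exp (- (1/2) * (\<Sum>i=1..d. \<Sum>j=1..d. s * \<Sigma> i j * s)))"
      using all[rule_format, of "\<lambda>_. s"] by simp
    then show ?thesis unfolding A B by simp
  qed
  have K1m: "K1 = m * d" using K1_def by simp
  have Ydec: "Y i \<omega> = (\<Sum>p=1..m. SB ((i-1)*m + p) \<omega>)" if i: "i \<in> {1..K2}" for i \<omega>
  proof -
    have "Y i \<omega> = (\<Sum>j=1..m*d. X (j + (i-1)*K1) \<omega>)" by (simp add: Y_def K1m)
    also have "\<dots> = (\<Sum>p=1..m. \<Sum>k=1..d. X (((p-1)*d + k) + (i-1)*K1) \<omega>)"
      by (rule sum_blocks)
    also have "\<dots> = (\<Sum>p=1..m. SB ((i-1)*m + p) \<omega>)"
      unfolding SB_def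
    proof (intro sum.cong refl)
      fix p k assume p: "p \<in> {1..m}"
      then obtain p' where "p = Suc p'" by (cases p) auto
      then show "X ((p - 1) * d + k + (i - 1) * K1) \<omega> = X (((i - 1) * m + p - 1) * d + k) \<omega>"
        by (simp add: K1m algebra_simps)
    qed
    finally show ?thesis .
  qed
  have Ym: "Y i \<in> borel_measurable M" if i: "i \<in> {1..K2}" for i
  proof -
    have "Y i = (\<lambda>\<omega>. \<Sum>p=1..m. SB ((i-1)*m + p) \<omega>)" using Ydec[OF i] by auto
    moreover have "SB ((i-1)*m + p) \<in> borel_measurable M" if "p \<in> {1..m}" for p
    proof (rule SBm)
      have "(i-1)*m + p \<le> (i-1)*m + m" using that by simp
      also have "\<dots> = i * m" using i by (cases i) auto
      also have "\<dots> \<le> m * K2" using i by simp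
      finally show "(i-1)*m + p \<in> {1..m*K2}" using that by simp
    qed
    ultimately show ?thesis by simp
  qed
  have chY: "(\<integral>\<omega>. cis (s * Y i \<omega>) \<partial>M) = complex_of_real (exp (- (s^2 * (real m * S)) / 2))"
    if i: "i \<in> {1..K2}" for i s
  proof -
    define J where "J = (\<lambda>p. (i-1)*m + p) ` {1..m}"
    have inj: "inj_on (\<lambda>p. (i-1)*m + p) {1..m}" by (auto simp: inj_on_def)
    have cardJ: "card J = m" using inj by (simp add: J_def card_image)
    have JI: "J \<subseteq> {1..m*K2}"
    proof
      fix b assume "b \<in> J"
      then obtain p where p: "p \<in> {1..m}" and bp: "b = (i-1)*m + p" unfolding J_def by blast
      have "(i-1)*m + p \<le> (i-1)*m + m" using p by simp
      also have "\<dots> = i * m" using i by (cases i) auto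
      also have "\<dots> \<le> m * K2" using i by simp
      finally show "b \<in> {1..m*K2}" using p bp by simp
    qed
    have ind0: "indep_vars (\<lambda>_. borel) (\<lambda>b \<omega>. (\<lambda>f. cis (s * (\<Sum>k=1..d. f k))) ((\<lambda>i\<in>{1..d}. X ((b-1)*d+i) \<omega>))) J"
      by (rule indep_vars_compose2[OF indep_vars_subset[OF indep JI]]) (unfold cis_conv_exp, measurable)
    have "(\<lambda>b \<omega>. (\<lambda>f. cis (s * (\<Sum>k=1..d. f k))) ((\<lambda>i\<in>{1..d}. X ((b-1)*d+i) \<omega>))) = (\<lambda>b \<omega>. cis (s * SB b \<omega>))"
      unfolding SB_def by (intro ext arg_cong[where f=cis] arg_cong[where f="\<lambda>x. s * x"] sum.cong) auto
    with ind0 have ind: "indep_vars (\<lambda>_. borel) (\<lambda>b \<omega>. cis (s * SB b \<omega>)) J" by simp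
    have intb: "integrable M (\<lambda>\<omega>. cis (s * SB b \<omega>))" if "b \<in> J" for b
    proof -
      have "SB b \<in> borel_measurable M" using SBm JI that by auto
      then have "(\<lambda>\<omega>. cis (s * SB b \<omega>)) \<in> borel_measurable M"
        unfolding cis_conv_exp by measurable
      then show ?thesis by (intro integrable_const_bound[where B=1]) auto
    qed
    have "(\<lambda>\<omega>. cis (s * Y i \<omega>)) = (\<lambda>\<omega>. \<Prod>b\<in>J. cis (s * SB b \<omega>))"
    proof
      fix \<omega>
      have "cis (s * Y i \<omega>) = cis (\<Sum>p=1..m. s * SB ((i-1)*m + p) \<omega>)"
        by (simp add: Ydec[OF i] sum_distrib_left)
      also have "\<dots> = (\<Prod>p=1..m. cis (s * SB ((i-1)*m + p) \<omega>))" by (simp add: cis_sum)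
      also have "\<dots> = (\<Prod>b\<in>J. cis (s * SB b \<omega>))" unfolding J_def
        by (subst prod.reindex[OF inj]) simp
      finally show "cis (s * Y i \<omega>) = (\<Prod>b\<in>J. cis (s * SB b \<omega>))" .
    qed
    then have "(\<integral>\<omega>. cis (s * Y i \<omega>) \<partial>M) = (\<integral>\<omega>. (\<Prod>b\<in>J. cis (s * SB b \<omega>)) \<partial>M)" by simp
    also have "\<dots> = (\<Prod>b\<in>J. (\<integral>\<omega>. cis (s * SB b \<omega>) \<partial>M))"
      by (rule indep_vars_lebesgue_integral) (use ind intb in \<open>auto simp: J_def\<close>)
    also have "\<dots> = (\<Prod>b\<in>J. complex_of_real (exp (- (s^2 * S) / 2)))"
      using JI by (intro prod.cong refl chB) auto
    also have "\<dots> = complex_of_real (exp (- (s^2 * S) / 2) ^ m)" using cardJ by simp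
    also have "exp (- (s^2 * S) / 2) ^ m = exp (real m * (- (s^2 * S) / 2))"
      by (rule exp_of_nat_mult[symmetric])
    finally show ?thesis by (simp add: algebra_simps)
  qed
  have lnY: "integrable M (\<lambda>\<omega>. ln \<bar>Y i \<omega>\<bar>) \<and> (\<integral>\<omega>. ln \<bar>Y i \<omega>\<bar> \<partial>M) = ln (real m * S) / 2 + c"
    if i: "i \<in> {1..K2}" for i
    unfolding c_def
    by (rule gauss_ln[OF assms(1) Ym[OF i]]) (use Spos pos chY[OF i] in auto)
  have lnX: "integrable M (\<lambda>\<omega>. ln \<bar>X ((b-1)*d+k) \<omega>\<bar>) \<and>
             (\<integral>\<omega>. ln \<bar>X ((b-1)*d+k) \<omega>\<bar> \<partial>M) = ln (\<Sigma> k k) / 2 + c"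
    if b: "b \<in> {1..m*K2}" and k: "k \<in> {1..d}" for b k
    unfolding c_def
    by (rule gauss_ln[OF assms(1) Xm[OF b k]]) (use diag_pos k chX[OF b k] in auto)
  have Kd: "K = (m*K2) * d" using K_def K1_def by simp
  have intX: "integrable M (\<lambda>\<omega>. ln \<bar>X i \<omega>\<bar>)" if i: "i \<in> {1..K}" for i
  proof -
    define b where "b = (i-1) div d + 1"
    define k where "k = (i-1) mod d + 1"
    have dpos: "d > 0" using pos by simp
    have "i - 1 < (m*K2) * d" using i Kd by auto
    then have "(i-1) div d < m*K2" using dpos by (simp add: div_less_iff_less_mult)
    then have b1: "b \<in> {1..m*K2}" by (simp add: b_def)
    have k1: "k \<in> {1..d}" using dpos by (simp add: k_def Suc_leI)
    have "(b-1)*d + k = i" using i by (simp add: b_def k_def)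
    then show ?thesis using lnX[OF b1 k1] by simp
  qed
  have sumX: "(\<Sum>i=1..K. \<integral>\<omega>. ln \<bar>X i \<omega>\<bar> \<partial>M) = real (m*K2) * ((\<Sum>k=1..d. ln (\<Sigma> k k)) / 2 + real d * c)"
  proof -
    have "(\<Sum>i=1..K. \<integral>\<omega>. ln \<bar>X i \<omega>\<bar> \<partial>M) = (\<Sum>b=1..m*K2. \<Sum>k=1..d. \<integral>\<omega>. ln \<bar>X ((b-1)*d+k) \<omega>\<bar> \<partial>M)"
      unfolding Kd by (rule sum_blocks)
    also have "\<dots> = (\<Sum>b=1..m*K2. \<Sum>k=1..d. ln (\<Sigma> k k) / 2 + c)"
      using lnX by (intro sum.cong refl) auto
    also have "\<dots> = real (m*K2) * ((\<Sum>k=1..d. ln (\<Sigma> k k)) / 2 + real d * c)"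
      by (simp add: sum.distrib sum_divide_distrib)
    finally show ?thesis .
  qed
  have sumY: "(\<Sum>i=1..K2. \<integral>\<omega>. ln \<bar>Y i \<omega>\<bar> \<partial>M) = real K2 * (ln (real m * S) / 2 + c)"
  proof -
    have "(\<Sum>i=1..K2. \<integral>\<omega>. ln \<bar>Y i \<omega>\<bar> \<partial>M) = (\<Sum>i=1..K2. ln (real m * S) / 2 + c)"
      using lnY by (intro sum.cong refl) auto
    then show ?thesis by simp
  qed
  have intSY: "integrable M (\<lambda>\<omega>. \<Sum>i=1..K2. ln \<bar>Y i \<omega>\<bar>)"
    using lnY by (intro Bochner_Integration.integrable_sum) auto
  have intSX: "integrable M (\<lambda>\<omega>. \<Sum>i=1..K. ln \<bar>X i \<omega>\<bar>)"
    using intX by (intro Bochner_Integration.integrable_sum) auto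
  have intF: "integrable M F"
    unfolding F_def using intSY intSX
    by (intro Bochner_Integration.integrable_mult_right Bochner_Integration.integrable_diff) auto
  have EF: "(\<integral>\<omega>. F \<omega> \<partial>M) = (1 / ln (real K1)) *
      ((1 / real K2) * (real K2 * (ln (real m * S) / 2 + c))
       - (1 / real K) * (real (m*K2) * ((\<Sum>k=1..d. ln (\<Sigma> k k)) / 2 + real d * c)))"
  proof -
    have "(\<integral>\<omega>. F \<omega> \<partial>M) = (1 / ln (real K1)) *
      ((1 / real K2) * (\<integral>\<omega>. (\<Sum>i=1..K2. ln \<bar>Y i \<omega>\<bar>) \<partial>M)
       - (1 / real K) * (\<integral>\<omega>. (\<Sum>i=1..K. ln \<bar>X i \<omega>\<bar>) \<partial>M))"
      unfolding F_def using intSY intSX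
      by (simp add: Bochner_Integration.integral_diff)
    also have "(\<integral>\<omega>. (\<Sum>i=1..K2. ln \<bar>Y i \<omega>\<bar>) \<partial>M) = (\<Sum>i=1..K2. \<integral>\<omega>. ln \<bar>Y i \<omega>\<bar> \<partial>M)"
      using lnY by (intro Bochner_Integration.integral_sum) auto
    also have "(\<integral>\<omega>. (\<Sum>i=1..K. ln \<bar>X i \<omega>\<bar>) \<partial>M) = (\<Sum>i=1..K. \<integral>\<omega>. ln \<bar>X i \<omega>\<bar> \<partial>M)"
      using intX by (intro Bochner_Integration.integral_sum) auto
    finally show ?thesis unfolding sumX sumY .
  qed
  have main: "(\<integral>\<omega>. F \<omega> \<partial>M) =
           (1/2) * (ln (real m) + ln (\<Sum>i=1..d. \<Sum>k=1..d. \<Sigma> i k)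
                    - (1 / real d) * (\<Sum>i=1..d. ln (\<Sigma> i i)))
                 / (ln (real m) + ln (real d))"
  proof -
    have dp: "real d > 0" and mp: "real m > 0" and kp: "real K2 > 0" using pos by auto
    have LK: "ln (real K1) = ln (real m) + ln (real d)" using dp mp by (simp add: K1_def ln_mult)
    have LS: "ln (real m * S) = ln (real m) + ln S" using mp Spos by (simp add: ln_mult)
    have KK: "real K = real d * real m * real K2" by (simp add: K_def K1_def)
    have e1: "(1 / real K2) * (real K2 * (ln (real m * S) / 2 + c)) = ln (real m * S) / 2 + c"
      using kp by simp
    have e2: "(1 / real K) * (real (m*K2) * ((\<Sum>k=1..d. ln (\<Sigma> k k)) / 2 + real d * c))
              = (\<Sum>k=1..d. ln (\<Sigma> k k)) / (2 * real d) + c"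
      using dp mp kp unfolding KK by (simp add: field_simps)
    have alg: "(1 / L) * (A / 2 + c - (B / (2 * real d) + c)) = (1/2) * (A - (1 / real d) * B) / L"
      for L A B :: real
      using dp by (cases "L = 0") (simp_all add: field_simps)
    have "(\<integral>\<omega>. F \<omega> \<partial>M) = (1 / (ln (real m) + ln (real d))) *
        (ln (real m * S) / 2 + c - ((\<Sum>k=1..d. ln (\<Sigma> k k)) / (2 * real d) + c))"
      unfolding EF e1 e2 LK ..
    also have "\<dots> = (1/2) * (ln (real m * S) - (1 / real d) * (\<Sum>k=1..d. ln (\<Sigma> k k))) / (ln (real m) + ln (real d))"
      by (rule alg)
    finally have "(\<integral>\<omega>. F \<omega> \<partial>M) = (1/2) * (ln (real m * S) - (1 / real d) * (\<Sum>k=1..d. ln (\<Sigma> k k))) / (ln (real m) + ln (real d))" .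
    then show ?thesis unfolding LS by (simp add: S_def algebra_simps)
  qed
  show ?thesis
  proof (intro conjI allI impI)
    show "integrable M F" by (rule intF)
    show "(\<integral>\<omega>. F \<omega> \<partial>M) =
           (1/2) * (ln (real m) + ln (\<Sum>i=1..d. \<Sum>k=1..d. \<Sigma> i k)
                    - (1 / real d) * (\<Sum>i=1..d. ln (\<Sigma> i i)))
                 / (ln (real m) + ln (real d))" by (rule main)
  next
    fix D :: nat assume "2 \<le> D" then show "(\<lambda>\<beta>::real. (1/2) * ln (\<beta> * real D ^ 2 + (1 - \<beta>) * real D) / ln (real D)) ` {0..1}
              = {1/2..1}" by (rule part3)
  next
    fix \<beta> :: real
    assume h: "d = K1 \<and> d \<ge> 2 \<and> m = 1 \<and> 0 \<le> \<beta> \<and> \<beta> \<le> 1 \<and>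
            (\<forall>i\<in>{1..d}. \<forall>k\<in>{1..d}. \<Sigma> i k = \<beta> + (if i = k then 1 - \<beta> else 0))"
    then have m1: "m = 1" and hs: "\<And>i k. i \<in> {1..d} \<Longrightarrow> k \<in> {1..d} \<Longrightarrow> \<Sigma> i k = \<beta> + (if i = k then 1 - \<beta> else 0)"
      by auto
    have diag: "(\<Sum>i=1..d. ln (\<Sigma> i i)) = 0"
      using hs by (intro sum.neutral) auto
    have row: "(\<Sum>k=1..d. \<Sigma> i k) = real d * \<beta> + (1 - \<beta>)" if i: "i \<in> {1..d}" for i
    proof -
      have "(\<Sum>k=1..d. \<Sigma> i k) = (\<Sum>k=1..d. \<beta> + (if i = k then 1 - \<beta> else 0))"
        using hs i by (intro sum.cong refl) auto
      also have "\<dots> = real d * \<beta> + (1 - \<beta>)" using i by (simp add: sum.distrib sum.delta)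
      finally show ?thesis .
    qed
    have "(\<Sum>i=1..d. \<Sum>k=1..d. \<Sigma> i k) = (\<Sum>i=1..d. real d * \<beta> + (1 - \<beta>))"
      using row by (intro sum.cong refl) auto
    also have "\<dots> = \<beta> * real d ^ 2 + (1 - \<beta>) * real d" by (simp add: power2_eq_square algebra_simps)
    finally have tot: "(\<Sum>i=1..d. \<Sum>k=1..d. \<Sigma> i k) = \<beta> * real d ^ 2 + (1 - \<beta>) * real d" .
    show "(\<integral>\<omega>. F \<omega> \<partial>M) = (1/2) * ln (\<beta> * real d ^ 2 + (1 - \<beta>) * real d) / ln (real d)"
      unfolding main tot diag m1 by simp
  qed
qed

end
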